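(* Let $\Sigma$ be a ranked alphabet, $B$ a strong bimonoid and $\mathcal{A}=(Q,\delta,F)$ a $(\Sigma,B)$-wta. The following are equivalent: (i) $\mathcal{N}(\mathcal{A})$ is finite; (ii) for each final variant $\mathcal{B}$ of $\mathcal{A}$, the Nerode algebra $\mathcal{N}(\mathcal{B})$ is finite and $[\![\mathcal{B}]\!]^{\mathrm{init}}$ is i-recognizable by a final variant of $\mathrm{rel}(\mathcal{N}(\mathcal{A}))$; (iii) each $r\in[\![\mathrm{FV}(\mathcal{A})]\!]^{\mathrm{init}}$ is i-recognizable by some crisp-deterministic $(\Sigma,B)$-wta.
   Context: Ranked alphabet $\Sigma$ ($\Sigma^{(0)}\ne\emptyset$), trees $T_\Sigma$; strong bimonoid $(B,\oplus,\otimes,\mathbb{0},\mathbb{1})$ (commutative monoid $(B,\oplus,\mathbb{0})$, monoid $(B,\otimes,\mathbb{1})$, $\mathbb{0}\ne\mathbb{1}$, $\mathbb{0}$ absorbing, no distributivity). $(\Sigma,B)$-wta $\mathcal{A}=(Q,\delta,F)$: $Q$ finite nonempty, $\delta_k:Q^k\times\Sigma^{(k)}\times Q\to B$, $F:Q\to B$. Vector algebra $\mathrm{V}(\mathcal{A})=(B^Q,\delta_{\mathcal{A}})$, $\delta_{\mathcal{A}}(\sigma)(v_1,\dots,v_k)_q=\bigoplus_{q_1,\dots,q_k}\big(\bigotimes_{i=1}^k(v_i)_{q_i}\big)\otimes\delta_k(q_1\dots q_k,\sigma,q)$; $h_{\mathrm{V}(\mathcal{A})}:T_\Sigma\to B^Q$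 the unique homomorphism; $[\![\mathcal{A}]\!]^{\mathrm{init}}(\xi)=\bigoplus_q h_{\mathrm{V}(\mathcal{A})}(\xi)_q\otimes F_q$. A weighted tree language $r:T_\Sigma\to B$ is i-recognizable by $\mathcal{A}$ if $r=[\![\mathcal{A}]\!]^{\mathrm{init}}$. Crisp-deterministic: for all $k,\sigma\in\Sigma^{(k)},q_1,\dots,q_k$ a unique $q$ with $\delta_k(q_1\dots q_k,\sigma,q)=\mathbb{1}$, all other such values $\mathbb{0}$. A final variant of $\mathcal{A}$ is any wta $(Q,\delta,F')$ with $F':Q\to B$ arbitrary; $\mathrm{FV}(\mathcal{A})$ is the set of final variants, $[\![\mathrm{FV}(\mathcal{A})]\!]^{\mathrm{init}}=\{[\![\mathcal{B}]\!]^{\mathrm{init}}\mid\mathcal{B}\in\mathrm{FV}(\mathcal{A})\}$. Nerode algebra $\mathcal{N}(\mathcal{A})=(Q_{\mathcal{N}},\theta_{\mathcal{N}},F_{\mathcal{N}})$: $(Q_{\mathcal{N}},\theta_{\mathcal{N}})$ the smallest subalgebra of $\mathrm{V}(\mathcal{A})$ (so $Q_{\mathcal{N}}=\mathrm{im}(h_{\mathrm{V}(\mathcal{A})})$), $(F_{\mathcal{N}})_v=\bigoplus_q v_q\otimes F_q$; finite if $Q_{\mathcal{N}}$ is finite. For a finite $(\Sigma,B)$-algebra $(P,\theta,G)$ ($(P,\theta)$ a $\Sigma$-algebra, $G:P\to B$), $\mathrm{rel}(P,\theta,G)$ is the crisp-deterministic wta $(P,\delta',G)$ with $\delta'_k(p_1\dots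 p_k,\sigma,p)=\mathbb{1}$ iff $\theta(\sigma)(p_1,\dots,p_k)=p$, and $\mathbb{0}$ otherwise. *)

theory Defs
  imports Main
begin

datatype 'f tree = Node 'f "'f tree list"

fun wf_tree :: "'f set \<Rightarrow> ('f \<Rightarrow> nat) \<Rightarrow> 'f tree \<Rightarrow> bool" where
  "wf_tree Sig rk (Node f ts) =
     (f \<in> Sig \<and> length ts = rk f \<and> (\<forall>t\<in>set ts. wf_tree Sig rk t))"

definition trees :: "'f set \<Rightarrow> ('f \<Rightarrow> nat) \<Rightarrow> 'f tree set" where
  "trees Sig rk = {t. wf_tree Sig rk t}"

definition ranked_alphabet :: "'f set \<Rightarrow> ('f \<Rightarrow> nat) \<Rightarrow> bool" where
  "ranked_alphabet Sig rk \<longleftrightarrow> finite Sig \<and> (\<exists>f\<in>Sig. rk f = 0)"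

text \<open>Strong bimonoid: the type class combination
  comm_monoid_add (commutative monoid (+,0)), monoid_mult (monoid ( *,1)),
  mult_zero (0 absorbing), zero_neq_one; no distributivity.\<close>

text \<open>A wta is given by a state set Q (finite, nonempty), transition weights
  delta qs f q (qs a list of length rk f) and final weights F.\<close>

definition is_wta :: "'s set \<Rightarrow> bool" where
  "is_wta Q \<longleftrightarrow> finite Q \<and> Q \<noteq> {}"

definition tuples :: "'s set \<Rightarrow> nat \<Rightarrow> 's list set" where
  "tuples Q k = {qs. length qs = k \<and> set qs \<subseteq> Q}"

text \<open>Operation of the vector algebra V(A) on B^Q (vectors are functions 's => 'b,
  taken to be 0 outside Q).\<close>

definition vstep :: "'s set \<Rightarrow> ('s list \<Rightarrow> 'f \<Rightarrow> 's \<Rightarrow> 'b::{comm_monoid_add,monoid_mult,mult_zero,zero_neq_one})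
    \<Rightarrow> 'f \<Rightarrow> ('s \<Rightarrow> 'b) list \<Rightarrow> ('s \<Rightarrow> 'b)" where
  "vstep Q \<delta> f vs = (\<lambda>q. if q \<in> Q then
      (\<Sum>qs\<in>tuples Q (length vs).
         prod_list (map (\<lambda>i. (vs ! i) (qs ! i)) [0..<length vs]) * \<delta> qs f q)
     else 0)"

fun hV :: "'s set \<Rightarrow> ('s list \<Rightarrow> 'f \<Rightarrow> 's \<Rightarrow> 'b::{comm_monoid_add,monoid_mult,mult_zero,zero_neq_one})
    \<Rightarrow> 'f tree \<Rightarrow> ('s \<Rightarrow> 'b)" where
  "hV Q \<delta> (Node f ts) = vstep Q \<delta> f (map (hV Q \<delta>) ts)"

definition init_sem :: "'s set \<Rightarrow> ('s list \<Rightarrow> 'f \<Rightarrow> 's \<Rightarrow> 'b::{comm_monoid_add,monoid_mult,mult_zero,zero_neq_one})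
    \<Rightarrow> ('s \<Rightarrow> 'b) \<Rightarrow> 'f tree \<Rightarrow> 'b" where
  "init_sem Q \<delta> F t = (\<Sum>q\<in>Q. hV Q \<delta> t q * F q)"

definition i_recognizable_by :: "'f set \<Rightarrow> ('f \<Rightarrow> nat) \<Rightarrow> ('f tree \<Rightarrow> 'b) \<Rightarrow> 's set
    \<Rightarrow> ('s list \<Rightarrow> 'f \<Rightarrow> 's \<Rightarrow> 'b::{comm_monoid_add,monoid_mult,mult_zero,zero_neq_one})
    \<Rightarrow> ('s \<Rightarrow> 'b) \<Rightarrow> bool" where
  "i_recognizable_by Sig rk r Q \<delta> F \<longleftrightarrow> (\<forall>t\<in>trees Sig rk. r t = init_sem Q \<delta> F t)"

definition crisp_deterministic :: "'f set \<Rightarrow> ('f \<Rightarrow> nat) \<Rightarrow> 's set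
    \<Rightarrow> ('s list \<Rightarrow> 'f \<Rightarrow> 's \<Rightarrow> 'b::{comm_monoid_add,monoid_mult,mult_zero,zero_neq_one}) \<Rightarrow> bool" where
  "crisp_deterministic Sig rk Q \<delta> \<longleftrightarrow>
     (\<forall>f\<in>Sig. \<forall>qs\<in>tuples Q (rk f).
        \<exists>!q. q \<in> Q \<and> \<delta> qs f q = 1 \<and> (\<forall>q'\<in>Q. q' \<noteq> q \<longrightarrow> \<delta> qs f q' = 0))"

definition nerode_states :: "'f set \<Rightarrow> ('f \<Rightarrow> nat) \<Rightarrow> 's set
    \<Rightarrow> ('s list \<Rightarrow> 'f \<Rightarrow> 's \<Rightarrow> 'b::{comm_monoid_add,monoid_mult,mult_zero,zero_neq_one})
    \<Rightarrow> ('s \<Rightarrow> 'b) set" where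
  "nerode_states Sig rk Q \<delta> = hV Q \<delta> ` trees Sig rk"

definition nerode_op :: "'s set \<Rightarrow> ('s list \<Rightarrow> 'f \<Rightarrow> 's \<Rightarrow> 'b::{comm_monoid_add,monoid_mult,mult_zero,zero_neq_one})
    \<Rightarrow> 'f \<Rightarrow> ('s \<Rightarrow> 'b) list \<Rightarrow> ('s \<Rightarrow> 'b)" where
  "nerode_op Q \<delta> = vstep Q \<delta>"

definition nerode_final :: "'s set \<Rightarrow> ('s \<Rightarrow> 'b::{comm_monoid_add,monoid_mult,mult_zero,zero_neq_one})
    \<Rightarrow> ('s \<Rightarrow> 'b) \<Rightarrow> 'b" where
  "nerode_final Q F v = (\<Sum>q\<in>Q. v q * F q)"

text \<open>rel(P, theta, G): crisp-deterministic wta with states P, transitions from theta,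
  final weights G. We give its transition function.\<close>

definition rel_delta :: "('f \<Rightarrow> 'p list \<Rightarrow> 'p)
    \<Rightarrow> 'p list \<Rightarrow> 'f \<Rightarrow> 'p \<Rightarrow> 'b::{comm_monoid_add,monoid_mult,mult_zero,zero_neq_one}" where
  "rel_delta \<theta> ps f p = (if \<theta> f ps = p then 1 else 0)"

end

theory Submission
  imports Defs "HOL-Library.FuncSet"
begin

lemma prod_list_zero_mem:
  "(0::'b::{monoid_mult,mult_zero}) \<in> set xs \<Longrightarrow> prod_list xs = 0"
  by (induction xs) auto

lemma prod_list_all_one:
  "(\<forall>x\<in>set xs. x = (1::'b::monoid_mult)) \<Longrightarrow> prod_list xs = 1"
  by (induction xs) auto

lemma finite_tuples: "finite P \<Longrightarrow> finite (tuples P k)"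
  unfolding tuples_def
  using finite_lists_length_eq[of P k] by (simp add: conj_commute)

lemma sum_tuples_ind:
  fixes c :: "'s list \<Rightarrow> 'b::{comm_monoid_add,monoid_mult,mult_zero,zero_neq_one}"
  assumes fin: "finite P" and ps: "set ps \<subseteq> P"
  shows "(\<Sum>qs\<in>tuples P (length ps).
     prod_list (map (\<lambda>i. ((map (\<lambda>p q. if q = p then 1 else 0) ps) ! i) (qs ! i)) [0..<length ps]) * c qs)
     = c ps"
proof -
  let ?g = "\<lambda>qs. prod_list (map (\<lambda>i. ((map (\<lambda>p q. if q = p then (1::'b) else 0) ps) ! i) (qs ! i)) [0..<length ps]) * c qs"
  have psin: "ps \<in> tuples P (length ps)" using ps by (simp add: tuples_def)
  have z: "?g qs = 0" if "qs \<in> tuples P (length ps) - {ps}" for qs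
  proof -
    from that have len: "length qs = length ps" and ne: "qs \<noteq> ps" by (auto simp: tuples_def)
    then obtain i where i: "i < length ps" "qs ! i \<noteq> ps ! i"
      using nth_equalityI by metis
    have "(0::'b) \<in> set (map (\<lambda>i. ((map (\<lambda>p q. if q = p then (1::'b) else 0) ps) ! i) (qs ! i)) [0..<length ps])"
      using i by (auto simp: image_iff intro!: bexI[of _ i])
    then show ?thesis by (simp add: prod_list_zero_mem)
  qed
  have o: "?g ps = c ps"
    by (subst prod_list_all_one) auto
  have "(\<Sum>qs\<in>tuples P (length ps). ?g qs) = ?g ps + (\<Sum>qs\<in>tuples P (length ps) - {ps}. ?g qs)"
    using sum.remove[OF finite_tuples[OF fin] psin] by blast
  also have "(\<Sum>qs\<in>tuples P (length ps) - {ps}. ?g qs) = 0"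
    using z by (intro sum.neutral) blast
  finally show ?thesis using o by simp
qed

lemma hV_det:
  fixes \<delta>' :: "'s list \<Rightarrow> 'f \<Rightarrow> 's \<Rightarrow> 'b::{comm_monoid_add,monoid_mult,mult_zero,zero_neq_one}"
  assumes fin: "finite P"
  and H: "\<And>f ts. wf_tree Sig rk (Node f ts) \<Longrightarrow> (\<forall>t\<in>set ts. st t \<in> P) \<Longrightarrow>
            st (Node f ts) \<in> P \<and> (\<forall>q\<in>P. \<delta>' (map st ts) f q = (if q = st (Node f ts) then 1 else 0))"
  shows "wf_tree Sig rk t \<Longrightarrow> st t \<in> P \<and> hV P \<delta>' t = (\<lambda>q. if q = st t then 1 else 0)"
proof (induction t)
  case (Node f ts)
  have wfs: "\<forall>t\<in>set ts. wf_tree Sig rk t" using Node.prems by simp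
  have ch: "\<forall>t\<in>set ts. st t \<in> P" using Node.IH wfs by blast
  have mp: "map (hV P \<delta>') ts = map (\<lambda>p q. if q = p then 1 else 0) (map st ts)"
    using Node.IH wfs by auto
  note HH = H[OF Node.prems ch]
  have "hV P \<delta>' (Node f ts) = (\<lambda>q. if q = st (Node f ts) then 1 else 0)"
  proof
    fix q
    show "hV P \<delta>' (Node f ts) q = (if q = st (Node f ts) then 1 else 0)"
    proof (cases "q \<in> P")
      case True
      have "hV P \<delta>' (Node f ts) q = (\<Sum>qs\<in>tuples P (length (map st ts)).
         prod_list (map (\<lambda>i. ((map (\<lambda>p q. if q = p then 1 else 0) (map st ts)) ! i) (qs ! i)) [0..<length (map st ts)]) * (\<lambda>qs. \<delta>' qs f q) qs)"
        using True by (simp only: hV.simps vstep_def mp) simp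
      also have "\<dots> = \<delta>' (map st ts) f q"
        by (rule sum_tuples_ind[OF fin]) (use ch in auto)
      finally show ?thesis using HH True by simp
    next
      case False
      then show ?thesis using HH by (auto simp: vstep_def)
    qed
  qed
  then show ?case using HH by simp
qed

lemma hV_outside: "q \<notin> Q \<Longrightarrow> hV Q \<delta> t q = 0"
  by (cases t) (simp add: vstep_def)

lemma init_sem_det:
  assumes "finite P" "p \<in> P" "hV P \<delta>' t = (\<lambda>q. if q = p then 1 else 0)"
  shows "init_sem P \<delta>' G t = G p"
proof -
  have "init_sem P \<delta>' G t = (\<Sum>q\<in>P. if q = p then G q else 0)"
    unfolding init_sem_def assms(3) by (intro sum.cong) auto
  also have "\<dots> = G p" using assms(1,2) by simp
  finally show ?thesis .
qed


lemma hV_in_nerode: "wf_tree Sig rk t \<Longrightarrow> hV Q \<delta> t \<in> nerode_states Sig rk Q \<delta>"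
  by (simp add: nerode_states_def trees_def)

lemma rel_part:
  fixes \<delta> :: "'s list \<Rightarrow> 'f \<Rightarrow> 's \<Rightarrow> 'b::{comm_monoid_add,monoid_mult,mult_zero,zero_neq_one}"
  assumes fin: "finite (nerode_states Sig rk Q \<delta>)"
  shows "i_recognizable_by Sig rk (init_sem Q \<delta> F')
           (nerode_states Sig rk Q \<delta>) (rel_delta (nerode_op Q \<delta>)) (nerode_final Q F')"
  unfolding i_recognizable_by_def
proof
  fix t assume t: "t \<in> trees Sig rk"
  let ?N = "nerode_states Sig rk Q \<delta>"
  have D: "hV Q \<delta> t \<in> ?N \<and> hV ?N (rel_delta (nerode_op Q \<delta>) :: _ \<Rightarrow> _ \<Rightarrow> _ \<Rightarrow> 'b) t
      = (\<lambda>q. if q = hV Q \<delta> t then 1 else 0)"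
  proof (rule hV_det[OF fin, where st = "hV Q \<delta>"])
    fix f ts assume w: "wf_tree Sig rk (Node f ts)"
    show "hV Q \<delta> (Node f ts) \<in> ?N \<and> (\<forall>q\<in>?N. rel_delta (nerode_op Q \<delta>) (map (hV Q \<delta>) ts) f q
        = (if q = hV Q \<delta> (Node f ts) then (1::'b) else 0))"
      using hV_in_nerode[OF w] by (auto simp: rel_delta_def nerode_op_def)
  qed (use t in \<open>simp add: trees_def\<close>)
  have "init_sem ?N (rel_delta (nerode_op Q \<delta>)) (nerode_final Q F') t = nerode_final Q F' (hV Q \<delta> t)"
    using D fin by (intro init_sem_det) auto
  then show "init_sem Q \<delta> F' t = init_sem ?N (rel_delta (nerode_op Q \<delta>)) (nerode_final Q F') t"
    by (simp add: nerode_final_def init_sem_def)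
qed

lemma nerode_nonempty:
  assumes "ranked_alphabet Sig rk"
  shows "nerode_states Sig rk Q \<delta> \<noteq> {}"
proof -
  obtain f where "f \<in> Sig" "rk f = 0" using assms by (auto simp: ranked_alphabet_def)
  then have "Node f [] \<in> trees Sig rk" by (simp add: trees_def)
  then show ?thesis by (auto simp: nerode_states_def)
qed

lemma crisp_forward:
  fixes \<delta> :: "'s list \<Rightarrow> 'f \<Rightarrow> 's \<Rightarrow> 'b::{comm_monoid_add,monoid_mult,mult_zero,zero_neq_one}"
  assumes ra: "ranked_alphabet Sig rk" and fin: "finite (nerode_states Sig rk Q \<delta>)"
  shows "\<exists>(P::nat set) \<delta>' G. is_wta P \<and> crisp_deterministic Sig rk P \<delta>' \<and>
                   i_recognizable_by Sig rk (init_sem Q \<delta> F') P \<delta>' G"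
proof -
  let ?N = "nerode_states Sig rk Q \<delta>"
  define P where "P = {0..<card ?N}"
  obtain g where g: "bij_betw g P ?N" using ex_bij_betw_nat_finite[OF fin] P_def by blast
  have ne: "?N \<noteq> {}" using nerode_nonempty[OF ra] .
  then have cp: "card ?N > 0" using fin by (simp add: card_gt_0_iff)
  have P0: "0 \<in> P" using cp P_def by simp
  have finP: "finite P" by (simp add: P_def)
  define e where "e x = (if x \<in> ?N then inv_into P g x else 0)" for x
  have eP: "e x \<in> P" for x
    using g P0 by (auto simp: e_def bij_betw_def intro: inv_into_into)
  have ge: "x \<in> ?N \<Longrightarrow> g (e x) = x" for x
    using g by (auto simp: e_def bij_betw_def f_inv_into_f)
  define \<delta>' :: "nat list \<Rightarrow> 'f \<Rightarrow> nat \<Rightarrow> 'b" where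
    "\<delta>' qs f q = (if e (vstep Q \<delta> f (map g qs)) = q then 1 else 0)" for qs f q
  define G where "G q = nerode_final Q F' (g q)" for q
  have wta: "is_wta P" using finP P0 by (auto simp: is_wta_def)
  have crisp: "crisp_deterministic Sig rk P \<delta>'"
    unfolding crisp_deterministic_def
  proof (intro ballI)
    fix f qs
    show "\<exists>!q. q \<in> P \<and> \<delta>' qs f q = 1 \<and> (\<forall>q'\<in>P. q' \<noteq> q \<longrightarrow> \<delta>' qs f q' = 0)"
      by (rule ex1I[of _ "e (vstep Q \<delta> f (map g qs))"]) (auto simp: \<delta>'_def eP)
  qed
  have rec: "i_recognizable_by Sig rk (init_sem Q \<delta> F') P \<delta>' G"
    unfolding i_recognizable_by_def
  proof
    fix t assume t: "t \<in> trees Sig rk"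
    have D: "e (hV Q \<delta> t) \<in> P \<and> hV P \<delta>' t = (\<lambda>q. if q = e (hV Q \<delta> t) then 1 else 0)"
    proof (rule hV_det[OF finP, where st = "\<lambda>t. e (hV Q \<delta> t)"])
      fix f ts assume w: "wf_tree Sig rk (Node f ts)"
      have "map g (map (\<lambda>t. e (hV Q \<delta> t)) ts) = map (hV Q \<delta>) ts"
        using w by (auto intro!: ge hV_in_nerode)
      then show "e (hV Q \<delta> (Node f ts)) \<in> P \<and> (\<forall>q\<in>P. \<delta>' (map (\<lambda>t. e (hV Q \<delta> t)) ts) f q =
          (if q = e (hV Q \<delta> (Node f ts)) then 1 else 0))"
        by (auto simp: \<delta>'_def eP simp del: map_map)
    qed (use t in \<open>simp add: trees_def\<close>)
    have "init_sem P \<delta>' G t = G (e (hV Q \<delta> t))"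
      using D finP by (intro init_sem_det) auto
    also have "\<dots> = nerode_final Q F' (hV Q \<delta> t)"
      using t by (simp add: G_def ge hV_in_nerode trees_def)
    finally show "init_sem Q \<delta> F' t = init_sem P \<delta>' G t"
      by (simp add: nerode_final_def init_sem_def)
  qed
  show ?thesis using wta crisp rec by blast
qed

fun cstate :: "'p set \<Rightarrow> ('p list \<Rightarrow> 'f \<Rightarrow> 'p \<Rightarrow> 'b::{comm_monoid_add,monoid_mult,mult_zero,zero_neq_one}) \<Rightarrow> 'f tree \<Rightarrow> 'p" where
  "cstate P \<delta>' (Node f ts) = (SOME q. q \<in> P \<and> \<delta>' (map (cstate P \<delta>') ts) f q = 1 \<and>
      (\<forall>q'\<in>P. q' \<noteq> q \<longrightarrow> \<delta>' (map (cstate P \<delta>') ts) f q' = 0))"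

lemma crisp_values:
  fixes \<delta>' :: "'p list \<Rightarrow> 'f \<Rightarrow> 'p \<Rightarrow> 'b::{comm_monoid_add,monoid_mult,mult_zero,zero_neq_one}"
  assumes w: "is_wta P" and c: "crisp_deterministic Sig rk P \<delta>'"
  shows "init_sem P \<delta>' G ` trees Sig rk \<subseteq> G ` P"
proof
  fix x assume "x \<in> init_sem P \<delta>' G ` trees Sig rk"
  then obtain t where t: "t \<in> trees Sig rk" and x: "x = init_sem P \<delta>' G t" by blast
  have finP: "finite P" using w by (simp add: is_wta_def)
  let ?st = "cstate P \<delta>'"
  have D: "?st t \<in> P \<and> hV P \<delta>' t = (\<lambda>q. if q = ?st t then 1 else 0)"
  proof (rule hV_det[OF finP, where st = ?st])
    fix f ts assume wt: "wf_tree Sig rk (Node f ts)" and ch: "\<forall>t\<in>set ts. ?st t \<in> P"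
    have "map ?st ts \<in> tuples P (rk f)" using wt ch by (auto simp: tuples_def)
    moreover have "f \<in> Sig" using wt by simp
    ultimately have "\<exists>q. q \<in> P \<and> \<delta>' (map ?st ts) f q = 1 \<and> (\<forall>q'\<in>P. q' \<noteq> q \<longrightarrow> \<delta>' (map ?st ts) f q' = 0)"
      using c unfolding crisp_deterministic_def by blast
    from someI_ex[OF this] have
      "?st (Node f ts) \<in> P \<and> \<delta>' (map ?st ts) f (?st (Node f ts)) = 1 \<and>
       (\<forall>q'\<in>P. q' \<noteq> ?st (Node f ts) \<longrightarrow> \<delta>' (map ?st ts) f q' = 0)"
      by simp
    then show "?st (Node f ts) \<in> P \<and> (\<forall>q\<in>P. \<delta>' (map ?st ts) f q = (if q = ?st (Node f ts) then 1 else 0))"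
      by auto
  qed (use t in \<open>simp add: trees_def\<close>)
  have "init_sem P \<delta>' G t = G (?st t)" using D finP by (intro init_sem_det) auto
  then show "x \<in> G ` P" using x D by auto
qed

lemma crisp_backward:
  fixes \<delta> :: "'s list \<Rightarrow> 'f \<Rightarrow> 's \<Rightarrow> 'b::{comm_monoid_add,monoid_mult,mult_zero,zero_neq_one}"
  assumes wQ: "is_wta Q"
  and H: "\<forall>F'::'s \<Rightarrow> 'b. \<exists>(P::nat set) \<delta>' G. is_wta P \<and> crisp_deterministic Sig rk P \<delta>' \<and>
                   i_recognizable_by Sig rk (init_sem Q \<delta> F') P \<delta>' G"
  shows "finite (nerode_states Sig rk Q \<delta>)"
proof -
  let ?N = "nerode_states Sig rk Q \<delta>"
  define S where "S q0 = (\<lambda>t. hV Q \<delta> t q0) ` trees Sig rk" for q0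
  have finQ: "finite Q" using wQ by (simp add: is_wta_def)
  have finS: "finite (S q0)" if q0: "q0 \<in> Q" for q0
  proof -
    obtain P :: "nat set" and \<delta>' G where w: "is_wta P" and c: "crisp_deterministic Sig rk P \<delta>'"
      and r: "i_recognizable_by Sig rk (init_sem Q \<delta> (\<lambda>q. if q = q0 then 1 else 0)) P \<delta>' G"
      using H by blast
    have eq: "init_sem Q \<delta> (\<lambda>q. if q = q0 then 1 else 0) t = hV Q \<delta> t q0" for t
    proof -
      have "init_sem Q \<delta> (\<lambda>q. if q = q0 then 1 else 0) t = (\<Sum>q\<in>Q. if q = q0 then hV Q \<delta> t q else 0)"
        unfolding init_sem_def by (intro sum.cong) auto
      also have "\<dots> = hV Q \<delta> t q0" using finQ q0 by simp
      finally show ?thesis .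
    qed
    have "S q0 = init_sem P \<delta>' G ` trees Sig rk"
      using r unfolding S_def i_recognizable_by_def by (auto simp: eq image_iff)
    also have "\<dots> \<subseteq> G ` P" by (rule crisp_values[OF w c])
    finally show ?thesis using w by (auto simp: is_wta_def intro: finite_subset)
  qed
  have "(\<lambda>v. restrict v Q) ` ?N \<subseteq> PiE Q S"
    by (auto simp: nerode_states_def S_def)
  moreover have "finite (PiE Q S)" using finQ finS by (intro finite_PiE) auto
  ultimately have f1: "finite ((\<lambda>v. restrict v Q) ` ?N)" by (rule finite_subset)
  have "inj_on (\<lambda>v. restrict v Q) ?N"
  proof (rule inj_onI)
    fix v w assume "v \<in> ?N" "w \<in> ?N" and eq: "restrict v Q = restrict w Q"
    then obtain t u where "v = hV Q \<delta> t" "w = hV Q \<delta> u" by (auto simp: nerode_states_def)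
    then show "v = w" using eq hV_outside[of _ Q \<delta>]
      by (auto simp: fun_eq_iff restrict_def split: if_splits) (metis)
  qed
  then show ?thesis using f1 finite_imageD by blast
qed

theorem theorem6p5:
  fixes Sig :: "'f set" and rk :: "'f \<Rightarrow> nat"
    and Q :: "'s set"
    and \<delta> :: "'s list \<Rightarrow> 'f \<Rightarrow> 's \<Rightarrow> 'b::{comm_monoid_add,monoid_mult,mult_zero,zero_neq_one}"
    and F :: "'s \<Rightarrow> 'b"
  assumes "ranked_alphabet Sig rk"
    and "is_wta Q"
  shows "(finite (nerode_states Sig rk Q \<delta>)
          \<longleftrightarrow> (\<forall>F'::'s \<Rightarrow> 'b.
                 finite (nerode_states Sig rk Q \<delta>) \<and>
                 (\<exists>G. i_recognizable_by Sig rk (init_sem Q \<delta> F')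
                        (nerode_states Sig rk Q \<delta>) (rel_delta (nerode_op Q \<delta>)) G)))
       \<and> (finite (nerode_states Sig rk Q \<delta>)
          \<longleftrightarrow> (\<forall>F'::'s \<Rightarrow> 'b.
                 \<exists>(P::nat set) \<delta>' G. is_wta P \<and> crisp_deterministic Sig rk P \<delta>' \<and>
                   i_recognizable_by Sig rk (init_sem Q \<delta> F') P \<delta>' G))"
  using rel_part crisp_forward[OF assms(1)] crisp_backward[OF assms(2)] by blast

end
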